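(* There exist universal constants $c_1,c_2>0$ such that the following holds. Let $n\ge 2$, let $K_0\in T^n$, and let $M_0=M^*(K_0)>0$. Then there exist a number $N\le c_1 n$ and directions $u_1,\dots,u_N\in S^{n-1}$ such that $K_1:=M_{u_N}\circ\cdots\circ M_{u_1}(K_0)$ satisfies \[ \frac{c_2}{\sqrt n}D_n\subseteq \frac{K_1}{M_0}. \]
   Context: $D_n$ denotes the closed Euclidean unit ball in $\mathbb R^n$ and $S^{n-1}$ the unit sphere. A nonempty compact set $K\subset\mathbb R^n$ is called star shaped if $x\in K$ implies that the segment $[0,x]\subseteq K$; $T^n$ denotes the family of star shaped sets in $\mathbb R^n$. For $u\in S^{n-1}$, $R_u$ denotes the reflection with respect to the hyperplane $u^\perp$, and the Minkowski symmetrization of a set $K$ in direction $u$ is $M_u(K)=\frac{K+R_uK}{2}$ (Minkowski sum; $K$ need not be convex). The support function of a (not necessarily convex) set $K$ is $h_K(u)=\sup\{\langle x,u\rangle: x\in K\}$, and the mean width of $K$ is $M^*(K)=\int_{S^{n-1}}h_K\,d\sigma$, where $\sigma$ is the normalized rotation-invariant (Haar) probability measure on $S^{n-1}$. *)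

theory Defs
  imports "HOL-Analysis.Analysis"
begin

text \<open>Euclidean space R^n is represented inside the fixed type nat => real as the
  functions vanishing at all coordinates >= n (so that the dimension n can be
  quantified inside the statement, after the universal constants).\<close>

definition Rn :: "nat \<Rightarrow> (nat \<Rightarrow> real) set" where
  "Rn n = {x. \<forall>i\<ge>n. x i = 0}"

definition inner_n :: "nat \<Rightarrow> (nat \<Rightarrow> real) \<Rightarrow> (nat \<Rightarrow> real) \<Rightarrow> real" where
  "inner_n n x y = (\<Sum>i<n. x i * y i)"

definition norm_n :: "nat \<Rightarrow> (nat \<Rightarrow> real) \<Rightarrow> real" where
  "norm_n n x = sqrt (inner_n n x x)"

definition scaleV :: "real \<Rightarrow> (nat \<Rightarrow> real) \<Rightarrow> (nat \<Rightarrow> real)" where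
  "scaleV c x = (\<lambda>i. c * x i)"

definition addV :: "(nat \<Rightarrow> real) \<Rightarrow> (nat \<Rightarrow> real) \<Rightarrow> (nat \<Rightarrow> real)" where
  "addV x y = (\<lambda>i. x i + y i)"

definition ball_n :: "nat \<Rightarrow> (nat \<Rightarrow> real) set" where
  "ball_n n = {x \<in> Rn n. norm_n n x \<le> 1}"

definition sphere_n :: "nat \<Rightarrow> (nat \<Rightarrow> real) set" where
  "sphere_n n = {x \<in> Rn n. norm_n n x = 1}"

definition star_shaped_n :: "nat \<Rightarrow> (nat \<Rightarrow> real) set \<Rightarrow> bool" where
  "star_shaped_n n K \<longleftrightarrow> K \<subseteq> Rn n \<and> K \<noteq> {} \<and> compact K \<and>
     (\<forall>x\<in>K. \<forall>t\<in>{0..1}. scaleV t x \<in> K)"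

definition refl_n :: "nat \<Rightarrow> (nat \<Rightarrow> real) \<Rightarrow> (nat \<Rightarrow> real) \<Rightarrow> (nat \<Rightarrow> real)" where
  "refl_n n u x = (\<lambda>i. x i - 2 * inner_n n x u * u i)"

definition mink_sym :: "nat \<Rightarrow> (nat \<Rightarrow> real) \<Rightarrow> (nat \<Rightarrow> real) set \<Rightarrow> (nat \<Rightarrow> real) set" where
  "mink_sym n u K = {scaleV (1/2) (addV x y) | x y. x \<in> K \<and> y \<in> refl_n n u ` K}"

definition support_n :: "nat \<Rightarrow> (nat \<Rightarrow> real) set \<Rightarrow> (nat \<Rightarrow> real) \<Rightarrow> real" where
  "support_n n K u = (SUP x\<in>K. inner_n n x u)"

definition lebesgue_n :: "nat \<Rightarrow> (nat \<Rightarrow> real) measure" where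
  "lebesgue_n n = PiM {..<n} (\<lambda>_. lborel)"

definition ext0 :: "nat \<Rightarrow> (nat \<Rightarrow> real) \<Rightarrow> (nat \<Rightarrow> real)" where
  "ext0 n x = (\<lambda>i. if i < n then x i else 0)"

text \<open>Normalized rotation invariant probability measure sigma on S^{n-1}, realised as the
  cone measure: the image of the normalized Lebesgue measure on the unit ball under the
  radial projection x |-> x/|x|.\<close>
definition sphere_measure :: "nat \<Rightarrow> (nat \<Rightarrow> real) measure" where
  "sphere_measure n =
     distr (uniform_measure (lebesgue_n n)
              {x \<in> space (lebesgue_n n). norm_n n (ext0 n x) \<le> 1})
           (PiM UNIV (\<lambda>_. borel))
           (\<lambda>x. scaleV (1 / norm_n n (ext0 n x)) (ext0 n x))"

definition mean_width :: "nat \<Rightarrow> (nat \<Rightarrow> real) set \<Rightarrow> real" where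
  "mean_width n K = integral\<^sup>L (sphere_measure n) (support_n n K)"

end

theory Submission
  imports Defs
begin


lemma norm_ext0_meas: "(\<lambda>x. norm_n n (ext0 n x)) \<in> borel_measurable (lebesgue_n n)"
  unfolding norm_n_def inner_n_def ext0_def lebesgue_n_def
  by measurable

lemma proj_meas: "(\<lambda>x. scaleV (1 / norm_n n (ext0 n x)) (ext0 n x)) \<in> measurable (lebesgue_n n) (PiM UNIV (\<lambda>_. borel))"
proof (rule measurable_PiM_single')
  fix i :: nat
  show "(\<lambda>x. scaleV (1 / norm_n n (ext0 n x)) (ext0 n x) i) \<in> borel_measurable (lebesgue_n n)"
  proof (cases "i < n")
    case True
    have "(\<lambda>x. scaleV (1 / norm_n n (ext0 n x)) (ext0 n x) i) = (\<lambda>x. (1 / norm_n n (ext0 n x)) * x i)"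
      by (simp add: scaleV_def ext0_def True)
    moreover have "(\<lambda>x. (1 / norm_n n (ext0 n x)) * x i) \<in> borel_measurable (lebesgue_n n)"
      using norm_ext0_meas[of n] True unfolding lebesgue_n_def by (measurable, simp)
    ultimately show ?thesis by simp
  next
    case False
    then show ?thesis unfolding scaleV_def ext0_def by simp
  qed
qed auto

lemma norm_meas: "norm_n n \<in> borel_measurable (PiM UNIV (\<lambda>_. borel))"
  unfolding norm_n_def inner_n_def by measurable



lemma norm_n_scale: "norm_n n (scaleV c y) = \<bar>c\<bar> * norm_n n y"
proof -
  have "inner_n n (scaleV c y) (scaleV c y) = c^2 * inner_n n y y"
    by (simp add: inner_n_def scaleV_def sum_distrib_left power2_eq_square algebra_simps)
  then show ?thesis by (simp add: norm_n_def real_sqrt_mult)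
qed

lemma norm_n_nonneg: "norm_n n y \<ge> 0"
  unfolding norm_n_def inner_n_def by (simp add: sum_nonneg)

lemma ennreal_div_self_le: "(a::ennreal) / a \<le> 1"
  by (metis divide_le_posI_ennreal ennreal_zero_divide mult.right_neutral
    order_le_imp_less_or_eq order_refl zero_le)

lemma proj_meas_u: "(\<lambda>x. scaleV (1 / norm_n n (ext0 n x)) (ext0 n x)) \<in> measurable (uniform_measure (lebesgue_n n) A) (PiM UNIV (\<lambda>_. borel))"
  using proj_meas[of n] by (subst measurable_cong_sets[OF sets_uniform_measure refl])


lemma sphere_total: "emeasure (sphere_measure n) (space (sphere_measure n)) \<le> 1"
proof -
  let ?L = "lebesgue_n n"
  let ?B = "{x \<in> space ?L. norm_n n (ext0 n x) \<le> 1}"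
  have Bs: "?B \<in> sets ?L" using norm_ext0_meas[of n] by measurable
  have "emeasure (sphere_measure n) (space (sphere_measure n))
      = emeasure (uniform_measure ?L ?B) (space ?L)"
    unfolding sphere_measure_def
    by (subst emeasure_distr[OF proj_meas_u]) (auto simp: space_PiM intro: sets.top[where M="Pi\<^sub>M UNIV (\<lambda>_. borel)", simplified space_PiM, simplified])
  also have "\<dots> = emeasure ?L (?B \<inter> space ?L) / emeasure ?L ?B"
    using Bs by simp
  also have "\<dots> \<le> 1"
    by (metis (no_types, lifting) Bs ennreal_div_self_le sets.Int_space_eq2)
  finally show ?thesis .
qed

lemma sphere_AE: "AE u in sphere_measure n. norm_n n u \<le> 1"
  unfolding sphere_measure_def
proof (subst AE_distr_iff[OF proj_meas_u])
  show "{x \<in> space (Pi\<^sub>M UNIV (\<lambda>_. borel)). norm_n n x \<le> 1} \<in> sets (Pi\<^sub>M UNIV (\<lambda>_. borel))"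
    using norm_meas[of n] by measurable
  show "AE x in uniform_measure (lebesgue_n n) {x \<in> space (lebesgue_n n). norm_n n (ext0 n x) \<le> 1}.
        norm_n n (scaleV (1 / norm_n n (ext0 n x)) (ext0 n x)) \<le> 1"
  proof (rule AE_I2)
    fix x
    show "norm_n n (scaleV (1 / norm_n n (ext0 n x)) (ext0 n x)) \<le> 1"
      using norm_n_nonneg[of n "ext0 n x"]
      by (cases "norm_n n (ext0 n x) = 0") (auto simp: norm_n_scale)
  qed
qed

lemma mw_bound:
  assumes "\<And>u. norm_n n u \<le> 1 \<Longrightarrow> support_n n K u \<le> B" "B \<ge> 0"
  shows "mean_width n K \<le> B"
proof -
  let ?M = "sphere_measure n"
  have fin: "finite_measure ?M"
    using sphere_total[of n] by (intro finite_measureI) (auto simp: top_unique)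
  have "mean_width n K \<le> integral\<^sup>L ?M (\<lambda>_. B)"
    unfolding mean_width_def
    apply (rule integral_mono_AE')
    using fin assms sphere_AE[of n] by (auto simp: finite_measure.integrable_const elim!: eventually_mono)
  also have "\<dots> = measure ?M (space ?M) * B" by simp
  also have "\<dots> \<le> 1 * B"
  proof (rule mult_right_mono[OF _ assms(2)])
    show "measure ?M (space ?M) \<le> 1"
      using sphere_total[of n] unfolding measure_def
      by (simp add: enn2real_leI)
  qed
  finally show ?thesis by simp
qed



lemma norm_n_L2: "norm_n n x = L2_set x {..<n}"
  by (simp add: norm_n_def inner_n_def L2_set_def power2_eq_square)

lemma inner_n_CS: "inner_n n x y \<le> norm_n n x * norm_n n y"
proof -
  have "inner_n n x y \<le> (\<Sum>i<n. \<bar>x i\<bar> * \<bar>y i\<bar>)"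
    unfolding inner_n_def by (rule sum_mono) (simp add: abs_mult[symmetric])
  also have "\<dots> \<le> L2_set x {..<n} * L2_set y {..<n}" by (rule L2_set_mult_ineq)
  finally show ?thesis by (simp add: norm_n_L2)
qed

lemma support_bound:
  assumes "K \<noteq> {}" "\<And>x. x \<in> K \<Longrightarrow> norm_n n x \<le> B" "norm_n n u \<le> 1"
  shows "support_n n K u \<le> B"
  unfolding support_n_def
proof (rule cSUP_least[OF assms(1)])
  fix x assume x: "x \<in> K"
  have "inner_n n x u \<le> norm_n n x * norm_n n u" by (rule inner_n_CS)
  also have "\<dots> \<le> B * 1"
    using assms(2)[OF x] assms(3) norm_n_nonneg[of n x] norm_n_nonneg[of n u]
    by (intro mult_mono) auto
  finally show "inner_n n x u \<le> B" by simp
qed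

lemma exists_big:
  assumes "star_shaped_n n K" "mean_width n K > 0"
  shows "\<exists>x\<in>K. norm_n n x \<ge> mean_width n K / 2"
proof (rule ccontr)
  assume "\<not> ?thesis"
  then have h: "\<And>x. x \<in> K \<Longrightarrow> norm_n n x \<le> mean_width n K / 2" by force
  have "mean_width n K \<le> mean_width n K / 2"
  proof (rule mw_bound)
    fix u assume "norm_n n u \<le> 1"
    then show "support_n n K u \<le> mean_width n K / 2"
      using assms h by (intro support_bound) (auto simp: star_shaped_n_def)
  qed (use assms in auto)
  with assms(2) show False by simp
qed



lemma sum_Pow_Suc:
  fixes g :: "nat set \<Rightarrow> 'b::comm_monoid_add"
  shows "sum g (Pow {..<Suc k}) = (\<Sum>B\<in>Pow {..<k}. g B + g (insert k B))"
proof -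
  have "Pow {..<Suc k} = Pow {..<k} \<union> insert k ` Pow {..<k}"
    by (simp add: lessThan_Suc Pow_insert)
  moreover have "Pow {..<k} \<inter> insert k ` Pow {..<k} = {}" by auto
  moreover have "inj_on (insert k) (Pow {..<k})"
    unfolding inj_on_def by (metis PowD insert_absorb insert_ident lessThan_iff order_less_irrefl subset_iff)
  ultimately have "sum g (Pow {..<Suc k}) = sum g (Pow {..<k}) + sum (g \<circ> insert k) (Pow {..<k})"
    by (simp add: sum.union_disjoint sum.reindex)
  then show ?thesis by (simp add: sum.distrib)
qed

definition Xs :: "nat \<Rightarrow> (nat \<Rightarrow> real) \<Rightarrow> nat set \<Rightarrow> real" where
  "Xs k th A = (\<Sum>i<k. if i \<in> A then - th i else th i)"

lemma Xs_Suc1: "B \<subseteq> {..<k} \<Longrightarrow> Xs (Suc k) th B = Xs k th B + th k"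
  unfolding Xs_def by auto

lemma Xs_Suc2: assumes "B \<subseteq> {..<k}" shows "Xs (Suc k) th (insert k B) = Xs k th B - th k"
proof -
  have "(\<Sum>i<k. if i \<in> insert k B then - th i else th i) = (\<Sum>i<k. if i \<in> B then - th i else th i)"
    by (rule sum.cong) auto
  then show ?thesis using assms unfolding Xs_def by auto
qed

lemma moments:
  "(\<Sum>A\<in>Pow {..<k}. Xs k th A) = 0 \<and>
   (\<Sum>A\<in>Pow {..<k}. (Xs k th A)^2) = 2^k * (\<Sum>i<k. (th i)^2) \<and>
   (\<Sum>A\<in>Pow {..<k}. (Xs k th A)^4) \<le> 3 * 2^k * (\<Sum>i<k. (th i)^2)^2"
proof (induction k)
  case 0
  then show ?case by (simp add: Xs_def)
next
  case (Suc k)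
  let ?S = "\<Sum>i<k. (th i)^2"
  let ?t = "th k"
  have e1: "(\<Sum>A\<in>Pow {..<Suc k}. Xs (Suc k) th A) = (\<Sum>B\<in>Pow {..<k}. 2 * Xs k th B)"
    by (subst sum_Pow_Suc, rule sum.cong) (auto simp: Xs_Suc1 Xs_Suc2)
  have e2: "(\<Sum>A\<in>Pow {..<Suc k}. (Xs (Suc k) th A)^2) = (\<Sum>B\<in>Pow {..<k}. 2 * (Xs k th B)^2 + 2 * ?t^2)"
    by (subst sum_Pow_Suc, rule sum.cong) (auto simp: Xs_Suc1 Xs_Suc2 power2_eq_square algebra_simps)
  have e4: "(\<Sum>A\<in>Pow {..<Suc k}. (Xs (Suc k) th A)^4) = (\<Sum>B\<in>Pow {..<k}. 2 * (Xs k th B)^4 + 12 * ?t^2 * (Xs k th B)^2 + 2 * ?t^4)"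
    by (subst sum_Pow_Suc, rule sum.cong) (auto simp: Xs_Suc1 Xs_Suc2 power2_eq_square power4_eq_xxxx algebra_simps)
  have cardP: "card (Pow {..<k}) = 2^k" by (simp add: card_Pow)
  have "(\<Sum>A\<in>Pow {..<Suc k}. Xs (Suc k) th A) = 0"
    using Suc.IH by (simp add: e1 sum_distrib_left[symmetric])
  moreover have "(\<Sum>A\<in>Pow {..<Suc k}. (Xs (Suc k) th A)^2) = 2^Suc k * (\<Sum>i<Suc k. (th i)^2)"
    using Suc.IH by (simp add: e2 sum.distrib sum_distrib_left[symmetric] cardP algebra_simps)
  moreover have "(\<Sum>A\<in>Pow {..<Suc k}. (Xs (Suc k) th A)^4) \<le> 3 * 2^Suc k * (\<Sum>i<Suc k. (th i)^2)^2"
  proof -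
    have "(\<Sum>A\<in>Pow {..<Suc k}. (Xs (Suc k) th A)^4)
       = 2 * (\<Sum>B\<in>Pow {..<k}. (Xs k th B)^4) + 12 * ?t^2 * (2^k * ?S) + 2^Suc k * ?t^4"
      using Suc.IH by (simp add: e4 sum.distrib sum_distrib_left[symmetric] cardP algebra_simps)
    also have "\<dots> \<le> 2 * (3 * 2^k * ?S^2) + 12 * ?t^2 * (2^k * ?S) + 2^Suc k * ?t^4"
      using Suc.IH by simp
    also have "\<dots> \<le> 3 * 2^Suc k * (?S + ?t^2)^2"
    proof -
      have "0 \<le> (2::real)^k * ?t^4" by simp
      then show ?thesis by (simp add: power2_eq_square power4_eq_xxxx algebra_simps)
    qed
    finally show ?thesis by simp
  qed
  ultimately show ?case by blast
qed

lemma pointwise_abs: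
  fixes x t :: real
  assumes "t > 0"
  shows "2 * t^3 * \<bar>x\<bar> \<ge> 3 * t^2 * x^2 - x^4"
proof -
  let ?s = "\<bar>x\<bar>"
  have "0 \<le> ?s * (?s - t)^2 * (?s + 2*t)" using assms by simp
  moreover have "x^2 = ?s^2" "x^4 = ?s^4" by (simp_all add: power_even_abs_numeral)
  ultimately show ?thesis by (simp add: power2_eq_square power3_eq_cube power4_eq_xxxx algebra_simps)
qed

lemma khintchine:
  "sqrt 3 * (\<Sum>A\<in>Pow {..<k}. \<bar>Xs k th A\<bar>) \<ge> 2^k * sqrt (\<Sum>i<k. (th i)^2)"
proof (cases "(\<Sum>i<k. (th i)^2) = 0")
  case True
  then show ?thesis by (simp add: sum_nonneg)
next
  case False
  let ?S = "\<Sum>i<k. (th i)^2"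
  have Spos: "?S > 0" using False by (simp add: less_le sum_nonneg)
  define t where "t = sqrt (3 * ?S)"
  have tpos: "t > 0" using Spos by (simp add: t_def)
  have t2: "t^2 = 3 * ?S" using Spos by (simp add: t_def)
  have "(\<Sum>A\<in>Pow {..<k}. 3 * t^2 * (Xs k th A)^2 - (Xs k th A)^4) \<le> (\<Sum>A\<in>Pow {..<k}. 2 * t^3 * \<bar>Xs k th A\<bar>)"
    by (rule sum_mono, rule pointwise_abs[OF tpos])
  then have "3 * t^2 * (2^k * ?S) - (\<Sum>A\<in>Pow {..<k}. (Xs k th A)^4) \<le> 2 * t^3 * (\<Sum>A\<in>Pow {..<k}. \<bar>Xs k th A\<bar>)"
    using moments[of k th] by (simp add: sum_subtractf sum_distrib_left[symmetric])
  then have "3 * t^2 * (2^k * ?S) - 3 * 2^k * ?S^2 \<le> 2 * t^3 * (\<Sum>A\<in>Pow {..<k}. \<bar>Xs k th A\<bar>)"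
    using moments[of k th] by linarith
  then have "3 * (3 * ?S) * (2^k * ?S) - 3 * 2^k * ?S^2 \<le> 2 * t * (3 * ?S) * (\<Sum>A\<in>Pow {..<k}. \<bar>Xs k th A\<bar>)"
  proof -
    have t3: "t^3 = t * (3 * ?S)" using t2 by (simp add: power3_eq_cube power2_eq_square)
    show ?thesis using \<open>3 * t^2 * (2^k * ?S) - 3 * 2^k * ?S^2 \<le> 2 * t^3 * (\<Sum>A\<in>Pow {..<k}. \<bar>Xs k th A\<bar>)\<close>
      unfolding t2 t3 by (simp add: mult.assoc)
  qed
  then have "(6 * ?S) * (2^k * ?S) \<le> (6 * ?S) * (t * (\<Sum>A\<in>Pow {..<k}. \<bar>Xs k th A\<bar>))"
    by (simp add: power2_eq_square algebra_simps)
  then have "2^k * ?S \<le> t * (\<Sum>A\<in>Pow {..<k}. \<bar>Xs k th A\<bar>)"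
    using Spos by (simp add: mult_le_cancel_left_pos)
  then have "2^k * ?S / t \<le> (\<Sum>A\<in>Pow {..<k}. \<bar>Xs k th A\<bar>)"
    using tpos by (simp add: divide_le_eq mult.commute)
  moreover have "2^k * ?S / t = 2^k * sqrt ?S / sqrt 3"
    unfolding t_def using Spos by (simp add: real_sqrt_mult field_simps)
  ultimately show ?thesis by (simp add: field_simps)
qed



definition flipv :: "nat set \<Rightarrow> (nat \<Rightarrow> real) \<Rightarrow> nat \<Rightarrow> real" where
  "flipv A v = (\<lambda>i. if i \<in> A then - v i else v i)"

definition pt :: "nat \<Rightarrow> (nat \<Rightarrow> real) \<Rightarrow> (nat set \<Rightarrow> real) \<Rightarrow> nat \<Rightarrow> real" where
  "pt k v l = (\<lambda>i. \<Sum>A\<in>Pow {..<k}. l A * flipv A v i)"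

definition Zk :: "nat \<Rightarrow> (nat \<Rightarrow> real) \<Rightarrow> (nat \<Rightarrow> real) set" where
  "Zk k v = pt k v ` {l. \<forall>A. 0 \<le> l A \<and> l A \<le> 1 / 2^k}"

definition ev :: "nat \<Rightarrow> nat \<Rightarrow> real" where
  "ev k = (\<lambda>i. if i = k then 1 else 0)"

lemma inner_ev: "k < n \<Longrightarrow> inner_n n q (ev k) = q k"
  unfolding inner_n_def ev_def by (simp add: if_distrib cong: if_cong)

lemma refl_ev: assumes "k < n" shows "refl_n n (ev k) q = (\<lambda>i. if i = k then - q i else q i)"
  unfolding refl_n_def inner_ev[OF assms] by (auto simp: ev_def)

lemma mink_mono: "K \<subseteq> K' \<Longrightarrow> mink_sym n u K \<subseteq> mink_sym n u K'"
  unfolding mink_sym_def by blast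

lemma foldl_mono: "K \<subseteq> K' \<Longrightarrow> foldl (\<lambda>K u. mink_sym n u K) K us \<subseteq> foldl (\<lambda>K u. mink_sym n u K) K' us"
proof (induction us arbitrary: K K')
  case (Cons a us)
  show ?case using Cons.IH[OF mink_mono[OF Cons.prems]] by simp
qed simp

lemma zono_step:
  assumes "k < n"
  shows "Zk (Suc k) v \<subseteq> mink_sym n (ev k) (Zk k v)"
proof
  fix z assume "z \<in> Zk (Suc k) v"
  then obtain l where l: "\<forall>A. 0 \<le> l A \<and> l A \<le> 1 / 2^Suc k" and z: "z = pt (Suc k) v l"
    unfolding Zk_def by auto
  define l1 where "l1 = (\<lambda>B. 2 * l B)"
  define l2 where "l2 = (\<lambda>B. 2 * l (insert k B))"
  have p: "pt k v l1 \<in> Zk k v" unfolding Zk_def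
    by (rule imageI) (use l in \<open>auto simp: l1_def field_simps\<close>)
  have q: "pt k v l2 \<in> Zk k v" unfolding Zk_def
    by (rule imageI) (use l in \<open>auto simp: l2_def field_simps\<close>)
  have eq: "z = scaleV (1/2) (addV (pt k v l1) (refl_n n (ev k) (pt k v l2)))"
  proof
    fix i
    have fl: "B \<in> Pow {..<k} \<Longrightarrow> flipv (insert k B) v i = (if i = k then - v i else flipv B v i)" for B
      by (auto simp: flipv_def)
    have fk: "B \<in> Pow {..<k} \<Longrightarrow> flipv B v k = v k" for B
      by (auto simp: flipv_def)
    show "z i = scaleV (1/2) (addV (pt k v l1) (refl_n n (ev k) (pt k v l2))) i"
    proof (cases "i = k")
      case True
      have "z i = (\<Sum>B\<in>Pow {..<k}. l B * flipv B v i + l (insert k B) * flipv (insert k B) v i)"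
        unfolding z pt_def by (subst sum_Pow_Suc) simp
      also have "\<dots> = (\<Sum>B\<in>Pow {..<k}. l B * v k - l (insert k B) * v k)"
        using True by (intro sum.cong) (auto simp: flipv_def)
      also have "\<dots> = (\<Sum>B\<in>Pow {..<k}. l B * v k) - (\<Sum>B\<in>Pow {..<k}. l (insert k B) * v k)"
        by (simp add: sum_subtractf)
      finally have zi: "z i = (\<Sum>B\<in>Pow {..<k}. l B * v k) - (\<Sum>B\<in>Pow {..<k}. l (insert k B) * v k)" .
      have a1: "pt k v l1 k = 2 * (\<Sum>B\<in>Pow {..<k}. l B * v k)"
        unfolding pt_def l1_def sum_distrib_left by (rule sum.cong) (auto simp: fk)
      have a2: "pt k v l2 k = 2 * (\<Sum>B\<in>Pow {..<k}. l (insert k B) * v k)"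
        unfolding pt_def l2_def sum_distrib_left by (rule sum.cong) (auto simp: fk)
      show ?thesis using True zi
        by (simp add: scaleV_def addV_def refl_ev[OF assms] a1 a2)
    next
      case False
      have "z i = (\<Sum>B\<in>Pow {..<k}. l B * flipv B v i + l (insert k B) * flipv (insert k B) v i)"
        unfolding z pt_def by (subst sum_Pow_Suc) simp
      also have "\<dots> = (\<Sum>B\<in>Pow {..<k}. l B * flipv B v i + l (insert k B) * flipv B v i)"
        using False by (intro sum.cong) (auto simp: fl)
      finally have zi: "z i = (\<Sum>B\<in>Pow {..<k}. l B * flipv B v i) + (\<Sum>B\<in>Pow {..<k}. l (insert k B) * flipv B v i)"
        by (simp add: sum.distrib)
      have a1: "pt k v l1 i = 2 * (\<Sum>B\<in>Pow {..<k}. l B * flipv B v i)"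
        unfolding pt_def l1_def sum_distrib_left by (rule sum.cong) auto
      have a2: "pt k v l2 i = 2 * (\<Sum>B\<in>Pow {..<k}. l (insert k B) * flipv B v i)"
        unfolding pt_def l2_def sum_distrib_left by (rule sum.cong) auto
      show ?thesis using False zi
        by (simp add: scaleV_def addV_def refl_ev[OF assms] a1 a2)
    qed
  qed
  show "z \<in> mink_sym n (ev k) (Zk k v)"
    unfolding mink_sym_def using p q eq by blast
qed

lemma fold_Z:
  assumes "k \<le> n" "Zk 0 v \<subseteq> K"
  shows "Zk k v \<subseteq> foldl (\<lambda>K u. mink_sym n u K) K (map ev [0..<k])"
  using assms(1)
proof (induction k)
  case 0
  then show ?case using assms(2) by simp
next
  case (Suc k)
  have "Zk (Suc k) v \<subseteq> mink_sym n (ev k) (Zk k v)" using Suc by (intro zono_step) auto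
  also have "\<dots> \<subseteq> mink_sym n (ev k) (foldl (\<lambda>K u. mink_sym n u K) K (map ev [0..<k]))"
    using Suc by (intro mink_mono) auto
  finally show ?case by simp
qed



lemma sum_upd:
  fixes h :: "'a \<Rightarrow> real"
  assumes "finite P" "A \<in> P"
  shows "(\<Sum>B\<in>P. (l(A:=x)) B * h B) = (\<Sum>B\<in>P. l B * h B) + (x - l A) * h A"
proof -
  have "(\<Sum>B\<in>P. (l(A:=x)) B * h B) = x * h A + (\<Sum>B\<in>P-{A}. (l(A:=x)) B * h B)"
    using assms by (simp add: sum.remove)
  also have "(\<Sum>B\<in>P-{A}. (l(A:=x)) B * h B) = (\<Sum>B\<in>P-{A}. l B * h B)"
    by (rule sum.cong) auto
  also have "(\<Sum>B\<in>P. l B * h B) = l A * h A + (\<Sum>B\<in>P-{A}. l B * h B)"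
    using assms by (simp add: sum.remove)
  ultimately show ?thesis by (simp add: algebra_simps)
qed

lemma cont_coord [continuous_intros]: "continuous_on S (\<lambda>l::'a \<Rightarrow> real. l A)"
  by (rule continuous_on_subset[OF continuous_on_product_coordinates]) simp

lemma zono_ball:
  fixes a :: real
  assumes va: "\<forall>i<n. v i = a" and v0: "\<forall>i. n \<le> i \<longrightarrow> v i = 0" and z: "z \<in> Rn n"
    and nz: "norm_n n z \<le> \<bar>a\<bar> / (2 * sqrt 3)"
  shows "z \<in> Zk n v"
proof -
  define c :: real where "c = 1/2^n"
  have cpos: "c > 0" by (simp add: c_def)
  define C where "C = {l :: nat set \<Rightarrow> real. \<forall>A. 0 \<le> l A \<and> l A \<le> c}"
  define F where "F = (\<lambda>l. \<Sum>i<n. (z i - pt n v l i)^2)"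
  have Ceq: "C = PiE UNIV (\<lambda>_. {0..c})"
    unfolding C_def PiE_def Pi_def extensional_def by auto
  have "compactin (product_topology (\<lambda>_. euclidean) UNIV) (PiE UNIV (\<lambda>_::nat set. {0..c::real}))"
    by (simp add: compactin_PiE)
  then have compC: "compact C" unfolding Ceq euclidean_product_topology by simp
  have neC: "C \<noteq> {}" using cpos unfolding C_def by (auto intro!: exI[of _ "\<lambda>_. 0"])
  have contF: "continuous_on C F" unfolding F_def pt_def by (intro continuous_intros)
  obtain l where lC: "l \<in> C" and lmin: "\<And>l'. l' \<in> C \<Longrightarrow> F l \<le> F l'"
    using continuous_attains_inf[OF compC neC contF] by blast
  define p where "p = pt n v l"
  define th where "th = (\<lambda>i. z i - p i)"
  define S where "S = (\<Sum>i<n. (th i)^2)"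
  define f where "f = (\<lambda>A. flipv A v)"
  define g where "g = (\<lambda>A. \<Sum>i<n. f A i * th i)"
  define q where "q = (\<lambda>A. \<Sum>i<n. (f A i)^2)"
  have qnn: "q A \<ge> 0" for A unfolding q_def by (simp add: sum_nonneg)
  have gX: "g A = a * Xs n th A" for A
    unfolding g_def f_def flipv_def Xs_def sum_distrib_left
    by (rule sum.cong) (auto simp: va)
  have pert: "2 * t * g A \<le> t^2 * q A" if A: "A \<in> Pow {..<n}" and lt: "l(A := l A + t) \<in> C" for A t
  proof -
    have ptu: "pt n v (l(A := l A + t)) i = p i + t * f A i" for i
      unfolding pt_def p_def f_def by (subst sum_upd[OF _ A]) auto
    have "F (l(A := l A + t)) = (\<Sum>i<n. (th i - t * f A i)^2)"
      unfolding F_def ptu th_def by (simp add: algebra_simps)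
    also have "\<dots> = S - 2 * t * g A + t^2 * q A"
      unfolding S_def g_def q_def
      by (simp add: power2_eq_square algebra_simps sum.distrib sum_subtractf sum_distrib_left)
    finally have "F (l(A := l A + t)) = S - 2 * t * g A + t^2 * q A" .
    moreover have "F l = S" unfolding F_def S_def th_def p_def ..
    ultimately show ?thesis using lmin[OF lt] by simp
  qed
  have claim1: "l A = c" if A: "A \<in> Pow {..<n}" and gp: "g A > 0" for A
  proof (rule ccontr)
    assume "l A \<noteq> c"
    then have lt: "l A < c" using lC unfolding C_def by (metis (mono_tags, lifting) mem_Collect_eq order_le_less)
    define t where "t = min (c - l A) (g A / (q A + 1))"
    have tpos: "t > 0" using lt gp qnn[of A] by (simp add: t_def)
    have "l(A := l A + t) \<in> C" using lC tpos unfolding C_def t_def by auto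
    from pert[OF A this] have "2 * t * g A \<le> t * (t * q A)" by (simp add: power2_eq_square)
    then have "2 * g A \<le> t * q A" using tpos by simp
    also have "t * q A \<le> (g A / (q A + 1)) * q A"
      using qnn[of A] by (intro mult_right_mono) (auto simp: t_def)
    also have "\<dots> < g A" using gp qnn[of A] by (simp add: field_simps)
    finally show False using gp by simp
  qed
  have claim2: "l A = 0" if A: "A \<in> Pow {..<n}" and gn: "g A < 0" for A
  proof (rule ccontr)
    assume "l A \<noteq> 0"
    then have lt: "l A > 0" using lC unfolding C_def by (metis (mono_tags, lifting) mem_Collect_eq order_le_less)
    define t where "t = min (l A) (- g A / (q A + 1))"
    have tpos: "t > 0" using lt gn qnn[of A] by (simp add: t_def divide_neg_pos)
    have "l(A := l A + (- t)) \<in> C" using lC tpos unfolding C_def by (auto simp: t_def) (smt (verit) min.cobounded1)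
    from pert[OF A this] have "- 2 * t * g A \<le> t * (t * q A)" by (simp add: power2_eq_square)
    then have "t * (- 2 * g A) \<le> t * (t * q A)" by (simp add: algebra_simps)
    then have "- 2 * g A \<le> t * q A" using tpos by (simp only: mult_le_cancel_left_pos)
    also have "t * q A \<le> (- g A / (q A + 1)) * q A"
      using qnn[of A] by (intro mult_right_mono) (auto simp: t_def)
    also have "\<dots> < - g A" using gn qnn[of A] by (simp add: field_simps)
    finally show False using gn by simp
  qed
  have lg: "l A * g A = c * max 0 (g A)" if "A \<in> Pow {..<n}" for A
    using claim1[OF that] claim2[OF that] by (cases "g A > 0"; cases "g A < 0") auto
  have pth: "(\<Sum>i<n. p i * th i) = (\<Sum>A\<in>Pow {..<n}. l A * g A)"
    unfolding p_def pt_def g_def f_def sum_distrib_right sum_distrib_left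
    by (subst sum.swap) (simp add: mult.assoc)
  have Seq: "S = (\<Sum>i<n. z i * th i) - (\<Sum>i<n. p i * th i)"
  proof -
    have "S = (\<Sum>i<n. z i * th i - p i * th i)"
      unfolding S_def by (rule sum.cong) (auto simp: th_def power2_eq_square algebra_simps)
    then show ?thesis by (simp add: sum_subtractf)
  qed
  have Snn: "S \<ge> 0" unfolding S_def by (simp add: sum_nonneg)
  have zth: "(\<Sum>i<n. z i * th i) \<le> norm_n n z * sqrt S"
    using inner_n_CS[of n z th] unfolding inner_n_def norm_n_def S_def
    by (simp add: power2_eq_square)
  have mx: "(\<Sum>A\<in>Pow {..<n}. max 0 (g A)) = \<bar>a\<bar> / 2 * (\<Sum>A\<in>Pow {..<n}. \<bar>Xs n th A\<bar>)"
  proof -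
    have pw: "max 0 (g A) = (\<bar>a\<bar> * \<bar>Xs n th A\<bar> + a * Xs n th A) / 2" for A
      unfolding gX by (cases "a \<ge> 0"; cases "Xs n th A \<ge> 0") (auto simp: abs_mult max_def mult_nonneg_nonpos mult_nonpos_nonneg zero_le_mult_iff)
    have "(\<Sum>A\<in>Pow {..<n}. max 0 (g A)) = (\<Sum>A\<in>Pow {..<n}. (\<bar>a\<bar> * \<bar>Xs n th A\<bar> + a * Xs n th A) / 2)"
      by (rule sum.cong[OF refl pw])
    also have "\<dots> = (\<Sum>A\<in>Pow {..<n}. \<bar>a\<bar> * \<bar>Xs n th A\<bar> + a * Xs n th A) / 2"
      by (rule sum_divide_distrib[symmetric])
    also have "\<dots> = (\<bar>a\<bar> * (\<Sum>A\<in>Pow {..<n}. \<bar>Xs n th A\<bar>) + a * (\<Sum>A\<in>Pow {..<n}. Xs n th A)) / 2"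
      by (simp add: sum.distrib sum_distrib_left)
    finally have "(\<Sum>A\<in>Pow {..<n}. max 0 (g A)) = (\<bar>a\<bar> * (\<Sum>A\<in>Pow {..<n}. \<bar>Xs n th A\<bar>) + a * (\<Sum>A\<in>Pow {..<n}. Xs n th A)) / 2" .
    then show ?thesis using moments[of n th] by simp
  qed
  have kh: "sqrt 3 * (\<Sum>A\<in>Pow {..<n}. \<bar>Xs n th A\<bar>) \<ge> 2^n * sqrt S"
    using khintchine[of n th] unfolding S_def .
  have low: "c * (\<Sum>A\<in>Pow {..<n}. max 0 (g A)) \<ge> \<bar>a\<bar> / (2 * sqrt 3) * sqrt S"
  proof -
    have "\<bar>a\<bar> / (2 * sqrt 3) * sqrt S = c * (\<bar>a\<bar> / 2 * (2^n * sqrt S / sqrt 3))"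
      by (simp add: c_def field_simps)
    also have "\<dots> \<le> c * (\<bar>a\<bar> / 2 * (\<Sum>A\<in>Pow {..<n}. \<bar>Xs n th A\<bar>))"
      using kh cpos by (intro mult_left_mono) (auto simp: field_simps)
    finally show ?thesis unfolding mx .
  qed
  have "S \<le> norm_n n z * sqrt S - \<bar>a\<bar> / (2 * sqrt 3) * sqrt S"
    using Seq zth low pth lg by (simp add: sum_distrib_left)
  also have "\<dots> \<le> 0" using mult_right_mono[OF nz, of "sqrt S"] Snn by simp
  finally have "S = 0" using Snn by simp
  then have th0: "\<forall>i<n. th i = 0" unfolding S_def by (simp add: sum_nonneg_eq_0_iff)
  have "z = p"
  proof
    fix i show "z i = p i"
    proof (cases "i < n")
      case True then show ?thesis using th0 by (simp add: th_def)
    next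
      case False
      then have "z i = 0" using z by (simp add: Rn_def)
      moreover have vi: "v i = 0" using False v0 by simp
      have "p i = 0" unfolding p_def pt_def flipv_def by (rule sum.neutral) (simp add: vi)
      ultimately show ?thesis by simp
    qed
  qed
  then show ?thesis unfolding Zk_def p_def using lC unfolding C_def c_def by blast
qed



lemma refl_scale: "refl_n n u (scaleV t y) = scaleV t (refl_n n u y)"
  unfolding refl_n_def scaleV_def inner_n_def
  by (rule ext) (simp add: sum_distrib_left algebra_simps)

lemma norm_n_zero_Rn:
  assumes "x \<in> Rn n" "norm_n n x = 0" shows "x = (\<lambda>_. 0)"
proof
  fix i
  have "(\<Sum>i<n. x i * x i) = 0" using assms(2) unfolding norm_n_def inner_n_def by simp
  then have "\<forall>i<n. x i * x i = 0" by (subst (asm) sum_nonneg_eq_0_iff) auto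
  then show "x i = 0 " using assms(1) unfolding Rn_def by (cases "i < n") auto
qed

lemma ev_sphere: assumes "k < n" shows "ev k \<in> sphere_n n"
proof -
  have "inner_n n (ev k) (ev k) = 1" using inner_ev[OF assms, of "ev k"] by (simp add: ev_def)
  moreover have "ev k \<in> Rn n" using assms by (auto simp: Rn_def ev_def)
  ultimately show ?thesis by (simp add: sphere_n_def norm_n_def)
qed

lemma main_lemma:
  assumes n: "n \<ge> 2" and K: "star_shaped_n n K0" and M: "mean_width n K0 > 0"
  shows "\<exists>us :: (nat \<Rightarrow> real) list.
         real (length us) \<le> 2 * real n \<and> set us \<subseteq> sphere_n n \<and>
         scaleV ((1/14) / sqrt (real n)) ` ball_n n \<subseteq>
           scaleV (1 / mean_width n K0) ` (foldl (\<lambda>K u. mink_sym n u K) K0 us)"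
proof -
  define M0 where "M0 = mean_width n K0"
  obtain x where xK: "x \<in> K0" and xbig: "norm_n n x \<ge> M0 / 2"
    using exists_big[OF K M] unfolding M0_def by blast
  have KRn: "K0 \<subseteq> Rn n" and Kstar: "\<forall>x\<in>K0. \<forall>t\<in>{0..1}. scaleV t x \<in> K0"
    using K unfolding star_shaped_n_def by auto
  have xRn: "x \<in> Rn n" using xK KRn by auto
  define L where "L = norm_n n x"
  have M0pos: "M0 > 0" using M unfolding M0_def .
  have Lpos: "L > 0" using xbig M0pos unfolding L_def by simp
  have npos: "real n > 0" using n by simp
  define b0 where "b0 = L / sqrt (real n)"
  have b0pos: "b0 > 0" using Lpos npos by (simp add: b0_def)
  define wp where "wp = (\<lambda>i. if i < n then b0 else 0)"
  define b where "b = (if x = wp then - b0 else b0)"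
  define w where "w = (\<lambda>i. if i < n then b else 0)"
  have absb: "\<bar>b\<bar> = b0" using b0pos by (simp add: b_def)
  have xw: "x \<noteq> w"
  proof
    assume xw: "x = w"
    show False
    proof (cases "x = wp")
      case True
      then have "w 0 = wp 0" using xw by simp
      then show False using n b0pos by (simp add: w_def wp_def b_def True)
    next
      case False
      then have "b = b0" by (simp add: b_def)
      then have "w = wp" unfolding w_def wp_def by (simp only:)
      then show False using xw False by simp
    qed
  qed
  have wRn: "w \<in> Rn n" by (simp add: Rn_def w_def)
  have ww: "inner_n n w w = L^2"
  proof -
    have "inner_n n w w = real n * b^2" by (simp add: inner_n_def w_def power2_eq_square)
    also have "\<dots> = real n * b0^2" using absb by (metis power2_abs)
    also have "\<dots> = L^2" using npos by (simp add: b0_def power_divide)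
    finally show ?thesis .
  qed
  have xx: "inner_n n x x = L^2"
    unfolding L_def norm_n_def by (simp add: inner_n_def sum_nonneg)
  define d where "d = (\<lambda>i. x i - w i)"
  define D where "D = norm_n n d"
  have dRn: "d \<in> Rn n" using xRn wRn by (simp add: Rn_def d_def)
  have Dpos: "D > 0"
  proof -
    have "D \<noteq> 0"
    proof
      assume "D = 0"
      then have "d = (\<lambda>_. 0)" using norm_n_zero_Rn[OF dRn] unfolding D_def by simp
      then have "x = w" by (auto simp: d_def fun_eq_iff)
      with xw show False by simp
    qed
    then show ?thesis using norm_n_nonneg[of n d] unfolding D_def by simp
  qed
  define u0 where "u0 = scaleV (1/D) d"
  have u0S: "u0 \<in> sphere_n n"
  proof -
    have "norm_n n u0 = \<bar>1/D\<bar> * D" unfolding u0_def norm_n_scale D_def ..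
    also have "\<dots> = 1" using Dpos by simp
    finally have "norm_n n u0 = 1" .
    moreover have "u0 \<in> Rn n" using dRn unfolding u0_def Rn_def scaleV_def by simp
    ultimately show ?thesis unfolding sphere_n_def by simp
  qed
  have Rx: "refl_n n u0 x = w"
  proof -
    have dd: "inner_n n d d = 2 * inner_n n x d"
    proof -
      have "inner_n n d d = (\<Sum>i<n. x i * x i + w i * w i - 2 * (x i * w i))"
        unfolding inner_n_def d_def by (rule sum.cong) (auto simp: algebra_simps)
      also have "\<dots> = inner_n n x x + inner_n n w w - 2 * (\<Sum>i<n. x i * w i)"
        unfolding inner_n_def by (simp add: sum.distrib sum_subtractf sum_distrib_left)
      also have "inner_n n x d = inner_n n x x - (\<Sum>i<n. x i * w i)"
        unfolding inner_n_def d_def by (simp add: right_diff_distrib sum_subtractf)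
      ultimately show ?thesis using xx ww by simp
    qed
    have D2: "D^2 = inner_n n d d"
      unfolding D_def norm_n_def by (simp add: inner_n_def sum_nonneg)
    have "inner_n n x u0 = inner_n n x d / D"
      unfolding u0_def inner_n_def scaleV_def by (simp add: sum_divide_distrib)
    moreover have DD: "D * D = 2 * inner_n n x d" using D2 dd by (simp add: power2_eq_square)
    ultimately have "2 * inner_n n x u0 * u0 i = d i" for i
    proof -
      have "2 * (inner_n n x d / D) * (1 / D * d i) = (2 * inner_n n x d) / (D * D) * d i" by simp
      also have "\<dots> = d i" using Dpos by (simp only: DD[symmetric]) simp
      finally show ?thesis using \<open>inner_n n x u0 = inner_n n x d / D\<close> by (simp add: u0_def scaleV_def)
    qed
    then show ?thesis unfolding refl_n_def by (auto simp: d_def)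
  qed
  define v where "v = (\<lambda>i. w i / 2)"
  have seg: "Zk 0 v \<subseteq> mink_sym n u0 K0"
  proof
    fix z assume "z \<in> Zk 0 v"
    then obtain l where lA: "l \<in> {l. \<forall>A. 0 \<le> l A \<and> l A \<le> 1 / 2^0}" and z: "z = pt 0 v l"
      unfolding Zk_def by (rule imageE)
    have l: "0 \<le> l {}" "l {} \<le> 1" using lA by auto
    have z': "z = scaleV (1/2) (addV (scaleV 0 x) (refl_n n u0 (scaleV (l {}) x)))"
      unfolding z refl_scale Rx by (auto simp: pt_def flipv_def scaleV_def addV_def v_def)
    have "scaleV 0 x \<in> K0" "scaleV (l {}) x \<in> K0" using Kstar xK l by auto
    then show "z \<in> mink_sym n u0 K0" unfolding mink_sym_def z' by blast
  qed
  define us where "us = u0 # map ev [0..<n]"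
  have fold: "Zk n v \<subseteq> foldl (\<lambda>K u. mink_sym n u K) K0 us"
    unfolding us_def using fold_Z[OF order_refl seg] by simp
  have len: "real (length us) \<le> 2 * real n" using n by (simp add: us_def)
  have setu: "set us \<subseteq> sphere_n n" using u0S by (auto simp: us_def ev_sphere)
  have incl: "scaleV ((1/14) / sqrt (real n)) ` ball_n n \<subseteq>
           scaleV (1 / M0) ` (foldl (\<lambda>K u. mink_sym n u K) K0 us)"
  proof
    fix y assume "y \<in> scaleV ((1/14) / sqrt (real n)) ` ball_n n"
    then obtain bb where bb: "bb \<in> ball_n n" and y: "y = scaleV ((1/14) / sqrt (real n)) bb" by blast
    define z where "z = scaleV M0 y"
    have zRn: "z \<in> Rn n" using bb by (simp add: z_def y ball_n_def Rn_def scaleV_def)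
    have s3: "sqrt 3 \<le> 7/4" by (rule real_le_lsqrt) (auto simp: power2_eq_square)
    have "norm_n n z = M0 * ((1/14) / sqrt (real n)) * norm_n n bb"
      using M0pos by (simp add: z_def y norm_n_scale abs_mult)
    also have "\<dots> \<le> M0 * ((1/14) / sqrt (real n)) * 1"
      using bb M0pos npos by (intro mult_left_mono) (auto simp: ball_n_def)
    also have "\<dots> \<le> \<bar>b / 2\<bar> / (2 * sqrt 3)"
    proof -
      have "M0 / 14 \<le> L / 7" using xbig unfolding L_def by simp
      also have "\<dots> \<le> L / (4 * sqrt 3)" using Lpos s3 by (intro divide_left_mono) auto
      finally have "M0 / 14 / sqrt (real n) \<le> L / (4 * sqrt 3) / sqrt (real n)"
        using npos by (intro divide_right_mono) auto
      moreover have "\<bar>b / 2\<bar> / (2 * sqrt 3) = L / (4 * sqrt 3) / sqrt (real n)"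
        using absb by (simp add: b0_def)
      ultimately show ?thesis by simp
    qed
    finally have nz: "norm_n n z \<le> \<bar>b / 2\<bar> / (2 * sqrt 3)" .
    have "z \<in> Zk n v"
      by (rule zono_ball[OF _ _ zRn nz]) (auto simp: v_def w_def)
    then have "z \<in> foldl (\<lambda>K u. mink_sym n u K) K0 us" using fold by blast
    moreover have "y = scaleV (1 / M0) z" using M0pos by (simp add: z_def scaleV_def)
    ultimately show "y \<in> scaleV (1 / M0) ` (foldl (\<lambda>K u. mink_sym n u K) K0 us)" by blast
  qed
  show ?thesis using len setu incl unfolding M0_def by blast
qed

theorem lemma2p1:
  shows "\<exists>c1 c2 :: real. c1 > 0 \<and> c2 > 0 \<and>
    (\<forall>n::nat. \<forall>K0. n \<ge> 2 \<longrightarrow> star_shaped_n n K0 \<longrightarrow> mean_width n K0 > 0 \<longrightarrow>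
      (\<exists>us :: (nat \<Rightarrow> real) list.
         real (length us) \<le> c1 * real n \<and> set us \<subseteq> sphere_n n \<and>
         scaleV (c2 / sqrt (real n)) ` ball_n n \<subseteq>
           scaleV (1 / mean_width n K0) ` (foldl (\<lambda>K u. mink_sym n u K) K0 us)))"
  apply (rule exI[of _ "2::real"], rule exI[of _ "1/14::real"])
  apply (intro conjI allI impI)
    apply simp
   apply simp
  apply (erule (2) main_lemma)
  done

end
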